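(* For all integers $n,m\ge 0$, \[ U_{n+m}(x,y,a;q)=\sum_{k=0}^n {n\brack k}(-1)^kq^{\binom k2}(aq^m)^kP_{n-k}(x,y)\,U_m(x,yq^{n-k},a;q). \]
   Context: $q$ is a fixed complex number with $0<|q|<1$; $(a;q)_n=\prod_{i=0}^{n-1}(1-aq^i)$; ${n\brack k}=\frac{(q;q)_n}{(q;q)_k(q;q)_{n-k}}$. The Cauchy polynomials are $P_n(x,y)=\prod_{i=0}^{n-1}(x-q^iy)$, and the Al-Salam–Carlitz polynomials are $U_n(x,y,a;q)=\sum_{k=0}^n{n\brack k}(-1)^kq^{\binom k2}a^kP_{n-k}(x,y)$. *)

theory Defs
  imports Complex_Main
begin

definition qpoch :: "complex \<Rightarrow> complex \<Rightarrow> nat \<Rightarrow> complex" where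
  "qpoch a q n = (\<Prod>i<n. 1 - a * q ^ i)"

definition qbinom :: "complex \<Rightarrow> nat \<Rightarrow> nat \<Rightarrow> complex" where
  "qbinom q n k = qpoch q q n / (qpoch q q k * qpoch q q (n - k))"

definition cauchyP :: "complex \<Rightarrow> nat \<Rightarrow> complex \<Rightarrow> complex \<Rightarrow> complex" where
  "cauchyP q n x y = (\<Prod>i<n. x - q ^ i * y)"

definition alsalamU :: "complex \<Rightarrow> nat \<Rightarrow> complex \<Rightarrow> complex \<Rightarrow> complex \<Rightarrow> complex" where
  "alsalamU q n x y a =
     (\<Sum>k=0..n. qbinom q n k * (-1) ^ k * q ^ (k choose 2) * a ^ k * cauchyP q (n - k) x y)"

end

theory Submission
  imports Defs
begin

lemma qpoch_Suc: "qpoch q q (Suc n) = qpoch q q n * (1 - q ^ Suc n)"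
  by (simp add: qpoch_def)

lemma qpoch_nz:
  assumes "cmod q < 1" shows "qpoch q q n \<noteq> 0"
proof -
  have h: "q * q ^ i \<noteq> 1" for i
  proof
    assume "q * q ^ i = 1"
    hence "q ^ Suc i = 1" by simp
    hence "cmod q ^ Suc i = 1" by (metis norm_one norm_power)
    moreover have "cmod q ^ Suc i < 1"
    proof -
      have "cmod q ^ i \<le> 1" using assms by (intro power_le_one) auto
      hence "cmod q * cmod q ^ i \<le> cmod q * 1" by (intro mult_left_mono) auto
      thus ?thesis using assms by simp
    qed
    ultimately show False by simp
  qed
  have h2: "1 - q * q ^ i \<noteq> 0" for i using h[of i] by (metis right_minus_eq)
  show ?thesis unfolding qpoch_def using h2 by (simp add: prod_zero_iff)
qed

lemma zc2 [simp]: "(0::nat) choose 2 = 0" by (simp add: numeral_2_eq_2)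

lemma qbinom_0: assumes "cmod q < 1" shows "qbinom q n 0 = 1"
  using qpoch_nz[OF assms, of n] by (simp add: qbinom_def qpoch_def)

lemma qbinom_nn: assumes "cmod q < 1" shows "qbinom q n n = 1"
  using qpoch_nz[OF assms, of n] by (simp add: qbinom_def qpoch_def)

lemma fld: fixes A B C u v :: complex
  assumes "B \<noteq> 0" "C \<noteq> 0" "1 - u \<noteq> 0" "1 - v \<noteq> 0"
  shows "A * (1 - u * v) / (B * (1 - u) * (C * (1 - v))) = A / (B * (C * (1 - v))) + u * (A / (B * (1 - u) * C))"
proof -
  have "A / (B * (C * (1 - v))) = A * (1-u) / (B * (1 - u) * (C * (1 - v)))" using assms by simp
  moreover have "u * (A / (B * (1 - u) * C)) = u * A * (1-v) / (B * (1 - u) * (C * (1 - v)))" using assms by simp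
  ultimately show ?thesis by (simp add: add_divide_distrib[symmetric] algebra_simps)
qed

lemma qbinom_pascal:
  assumes "cmod q < 1" and "k < N"
  shows "qbinom q (Suc N) (Suc k) = qbinom q N k + q ^ Suc k * qbinom q N (Suc k)"
proof -
  obtain d where N: "N = k + Suc d" using assms(2) less_iff_Suc_add by auto
  define A where "A = qpoch q q (k + d + 1)"
  define B where "B = qpoch q q k"
  define C where "C = qpoch q q d"
  have A: "A \<noteq> 0" "B \<noteq> 0" "C \<noteq> 0" using qpoch_nz[OF assms(1)] by (auto simp: A_def B_def C_def)
  have e1: "qpoch q q (Suc N) = A * (1 - q ^ (k + d + 2))"
    using qpoch_Suc[of q "k+d+1"] by (simp add: N A_def)
  have e2: "qpoch q q N = A" by (simp add: N A_def)
  have e3: "qpoch q q (Suc k) = B * (1 - q ^ Suc k)" by (simp add: qpoch_Suc B_def)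
  have e4: "qpoch q q (Suc d) = C * (1 - q ^ Suc d)" by (simp add: qpoch_Suc C_def)
  have n1: "1 - q ^ Suc k \<noteq> 0" using qpoch_nz[OF assms(1), of "Suc k"] e3 by auto
  have n2: "1 - q ^ Suc d \<noteq> 0" using qpoch_nz[OF assms(1), of "Suc d"] e4 by auto
  have s1: "Suc N - Suc k = Suc d" "N - k = Suc d" "N - Suc k = d" by (auto simp: N)
  have pw: "q ^ (k + d + 2) = q ^ Suc k * q ^ Suc d" by (simp add: power_add[symmetric])
  show ?thesis
    unfolding qbinom_def s1 e1 e2 e3 e4 B_def[symmetric] C_def[symmetric]
    unfolding pw using fld[OF A(2,3) n1 n2, of A] by (simp add: mult_ac)
qed

definition g :: "complex \<Rightarrow> nat \<Rightarrow> nat \<Rightarrow> complex" where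
  "g q N l = (if l \<le> N then qbinom q N l else 0)"

lemma g_pascal:
  assumes "cmod q < 1" and "l \<le> Suc N"
  shows "g q (Suc N) l = (if l = 0 then 0 else g q N (l - 1)) + q ^ l * g q N l"
proof (cases l)
  case 0 then show ?thesis by (simp add: g_def qbinom_0[OF assms(1)])
next
  case (Suc k)
  show ?thesis
  proof (cases "k < N")
    case True then show ?thesis using qbinom_pascal[OF assms(1) True] Suc by (simp add: g_def)
  next
    case False
    hence "k = N" using assms Suc by auto
    then show ?thesis using Suc qbinom_nn[OF assms(1)] by (simp add: g_def)
  qed
qed

lemma cauchyP_Suc1: "cauchyP q (Suc n) x y = (x - y) * cauchyP q n x (y * q)"
  unfolding cauchyP_def by (subst prod.lessThan_Suc_shift) (simp add: mult_ac)

lemma cauchyP_Suc2: "cauchyP q (Suc n) x y = cauchyP q n x y * (x - q ^ n * y)"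
  unfolding cauchyP_def by simp

lemma choose2_Suc: "Suc l choose 2 = (l choose 2) + l"
  by (simp add: numeral_2_eq_2)

lemma U_rec:
  assumes "cmod q < 1"
  shows "alsalamU q (Suc N) x y a = (x - y) * alsalamU q N x (y*q) (a*q) - a * alsalamU q N x y (a*q)"
proof -
  define t where "t l = (-1) ^ l * q ^ (l choose 2) * a ^ l * cauchyP q (Suc N - l) x y" for l
  have "alsalamU q (Suc N) x y a = (\<Sum>l=0..Suc N. g q (Suc N) l * t l)"
    unfolding alsalamU_def t_def by (rule sum.cong) (auto simp: g_def)
  also have "\<dots> = (\<Sum>l=0..Suc N. (if l = 0 then 0 else g q N (l - 1)) * t l)
      + (\<Sum>l=0..Suc N. q ^ l * g q N l * t l)"
    by (subst sum.distrib[symmetric], rule sum.cong) (auto simp: g_pascal[OF assms] algebra_simps)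
  also have "(\<Sum>l=0..Suc N. (if l = 0 then 0 else g q N (l - 1)) * t l) = (\<Sum>l=0..N. g q N l * t (Suc l))"
    by (subst sum.atLeast0_atMost_Suc_shift) simp
  also have "\<dots> = - a * alsalamU q N x y (a*q)"
    unfolding alsalamU_def sum_distrib_left
  proof (rule sum.cong)
    fix l assume "l \<in> {0..N}"
    hence l: "l \<le> N" by simp
    have "Suc N - Suc l = N - l" by simp
    show "g q N l * t (Suc l) = - a * (qbinom q N l * (- 1) ^ l * q ^ (l choose 2) * (a * q) ^ l * cauchyP q (N - l) x y)"
      using l unfolding t_def g_def choose2_Suc by (simp add: power_add power_mult_distrib algebra_simps)
  qed simp
  also have "(\<Sum>l=0..Suc N. q ^ l * g q N l * t l) = (\<Sum>l=0..N. q ^ l * g q N l * t l)"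
    by (simp add: g_def)
  also have "\<dots> = (x - y) * alsalamU q N x (y*q) (a*q)"
    unfolding alsalamU_def sum_distrib_left
  proof (rule sum.cong)
    fix l assume "l \<in> {0..N}"
    hence l: "l \<le> N" by simp
    hence s: "Suc N - l = Suc (N - l)" by simp
    show "q ^ l * g q N l * t l = (x - y) * (qbinom q N l * (- 1) ^ l * q ^ (l choose 2) * (a * q) ^ l * cauchyP q (N - l) x (y * q))"
      using l unfolding t_def g_def s cauchyP_Suc1 by (simp add: power_mult_distrib algebra_simps)
  qed simp
  finally show ?thesis by simp
qed

lemma alg: fixes z P1 P0 w c U1 a U2 :: complex
  assumes "z * P1 = P0 * w"
  shows "z * (c * P1 * U1) - a * (c * P0 * U2) = c * P0 * (w * U1 - a * U2)"
proof -
  have "z * (c * P1 * U1) = c * (z * P1) * U1" by (simp add: mult_ac)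
  thus ?thesis using assms by (simp add: algebra_simps)
qed

theorem mainTheorem3:
  fixes q x y a :: complex and n m :: nat
  assumes "0 < cmod q" and "cmod q < 1"
  shows "alsalamU q (n + m) x y a =
    (\<Sum>k=0..n. qbinom q n k * (-1) ^ k * q ^ (k choose 2) * (a * q ^ m) ^ k
        * cauchyP q (n - k) x y * alsalamU q m x (y * q ^ (n - k)) a)"
proof (induction m arbitrary: y a)
  case 0
  have U0: "alsalamU q 0 x z b = 1" for z b by (simp add: alsalamU_def cauchyP_def qbinom_def qpoch_def)
  show ?case by (simp only: U0 add_0_right power_0 mult.right_neutral mult_1_right) (simp add: alsalamU_def)
next
  case (Suc m)
  have "alsalamU q (n + Suc m) x y a = (x - y) * alsalamU q (n + m) x (y*q) (a*q) - a * alsalamU q (n+m) x y (a*q)"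
    using U_rec[OF assms(2)] by simp
  also have "\<dots> = (\<Sum>k=0..n. qbinom q n k * (-1) ^ k * q ^ (k choose 2) * (a * q ^ Suc m) ^ k
        * cauchyP q (n - k) x y * alsalamU q (Suc m) x (y * q ^ (n - k)) a)"
    unfolding Suc.IH sum_distrib_left sum_subtractf[symmetric]
  proof (rule sum.cong)
    fix k assume "k \<in> {0..n}"
    have P: "(x - y) * cauchyP q (n - k) x (y * q) = cauchyP q (n - k) x y * (x - y * q ^ (n - k))"
      using cauchyP_Suc1[of q "n-k" x y] cauchyP_Suc2[of q "n-k" x y] by (simp add: mult_ac)
    have yy: "y * q * q ^ (n - k) = y * q ^ (n - k) * q" by (simp add: mult_ac)
    show "(x - y) * (qbinom q n k * (- 1) ^ k * q ^ (k choose 2) * (a * q * q ^ m) ^ k * cauchyP q (n - k) x (y * q) *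
           alsalamU q m x (y * q * q ^ (n - k)) (a * q)) -
          a * (qbinom q n k * (- 1) ^ k * q ^ (k choose 2) * (a * q * q ^ m) ^ k * cauchyP q (n - k) x y *
           alsalamU q m x (y * q ^ (n - k)) (a * q)) =
          qbinom q n k * (- 1) ^ k * q ^ (k choose 2) * (a * q ^ Suc m) ^ k * cauchyP q (n - k) x y *
          alsalamU q (Suc m) x (y * q ^ (n - k)) a"
      unfolding U_rec[OF assms(2)] yy
      using alg[OF P, of "qbinom q n k * (- 1) ^ k * q ^ (k choose 2) * (a * q ^ Suc m) ^ k"
         "alsalamU q m x (y * q ^ (n - k) * q) (a * q)" a "alsalamU q m x (y * q ^ (n - k)) (a * q)"]
      by (simp add: mult.assoc)
  qed simp
  finally show ?case .
qed

end
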